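(* Fix a target miscoverage level $\bar\alpha\in(0,1)$, a threshold $\lambda_{\max}>0$, and a constant $c\in(0,1)$, and set $\gamma=c\lambda_{\max}$ (so $\gamma\in(0,\lambda_{\max})$). Consider any sequence of weights $(\lambda_t)_{t\ge1}$, actions $(\alpha_t)_{t\ge1}\subset[0,1]$, and error indicators $(\mathrm{err}_t)_{t\ge1}\subset\{0,1\}$ generated as follows, where everything other than the rules below (the data, the planned actions $\alpha^\star_{t|t}$ when $\lambda_t>0$, and the errors when $\alpha_t\in(0,1)$) may be arbitrary, even adversarial: (i) $\lambda_1\in[-\gamma\bar\alpha,\ \lambda_{\max}+\gamma(1-\bar\alpha)]$ (e.g. $\lambda_1\in[0,\lambda_{\max}]$); (ii) at each time $t$, a planned action $\alpha^\star_{t|t}\in[0,1]$ is produced by some procedure satisfying $\alpha^\star_{t|t}=1$ whenever $\lambda_t\le 0$; (iii) $\alpha_t=0$ if $\lambda_t\ge\lambda_{\max}$ and $\alpha_t=\alpha^\star_{t|t}$ otherwise; (iv) $\mathrm{err}_t=\mathbf 1(Y_t\notin C_t(1-\alpha_t))$, where the prediction sets satisfy $C_t(1-0)=\mathcal Y$ (so $\mathrm{err}_t=0$ when $\alpha_t=0$) and $\mathrm{err}_t=1$ when $\alpha_t=1$; (v) $\lambda_{t+1}=\lambda_t-\gamma(\bar\alpha-\mathrm{err}_t)$. Then for every $m\ge 0$ and every $K\ge1$, $$\left|\frac1K\sum_{t=m+1}^{m+K}\mathrm{err}_t-\bar\alpha\right|\le\frac{c+1}{cK}.$$ In particular $\lim_{K\to\infty}\frac1K\sum_{t=1}^K\mathrm{err}_t=\bar\alpha$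 for every realization, hence $\limsup_{K\to\infty}\frac1K\sum_{t=1}^K \mathbf 1(Y_t\notin C_t(1-\alpha_t))\le\bar\alpha$ almost surely, uniformly over all joint distributions of the time series.
   Context: This is the Bellman Conformal Inference (BCI) procedure for online calibration of prediction intervals. A time series $Y_1,Y_2,\dots$ takes values in a space $\mathcal Y$; at each time $t$ a forecaster provides nested prediction sets $C_t(1-\beta)\subset\mathcal Y$, $\beta\in[0,1]$, where $\beta$ is the nominal miscoverage rate and smaller $\beta$ gives a larger set, with the safeguard $C_t(1-0)=\mathcal Y$. The procedure chooses a nominal miscoverage rate $\alpha_t$ and outputs $C_t(1-\alpha_t)$; $\mathrm{err}_t$ indicates that $Y_t$ is not covered. The planned action $\alpha^\star_{t|t}$ is in the paper the first-period minimizer of a stochastic control problem whose objective is (expected sum of interval lengths) $+\lambda_t\cdot$(excess average miscoverage), but only property (ii) is used. *)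

theory Defs
  imports "HOL-Analysis.Analysis"
begin

end

theory Submission
  imports Defs
begin

theorem theorem1:
  fixes abar lmax c :: real
    and lam alpha astar err :: "nat \<Rightarrow> real"
    and Y :: "nat \<Rightarrow> 'y"
    and C :: "nat \<Rightarrow> real \<Rightarrow> 'y set"
  assumes abar: "0 < abar" "abar < 1"
    and lmax: "0 < lmax"
    and c: "0 < c" "c < 1"
    and init: "- (c * lmax) * abar \<le> lam 1" "lam 1 \<le> lmax + (c * lmax) * (1 - abar)"
    and nested: "\<And>t a b. 1 \<le> t \<Longrightarrow> 0 \<le> a \<Longrightarrow> a \<le> b \<Longrightarrow> b \<le> 1 \<Longrightarrow>
                   C t (1 - b) \<subseteq> C t (1 - a)"
    and full: "\<And>t. 1 \<le> t \<Longrightarrow> C t (1 - 0) = UNIV"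
    and astar_range: "\<And>t. 1 \<le> t \<Longrightarrow> 0 \<le> astar t \<and> astar t \<le> 1"
    and astar_nonpos: "\<And>t. 1 \<le> t \<Longrightarrow> lam t \<le> 0 \<Longrightarrow> astar t = 1"
    and alpha_def: "\<And>t. 1 \<le> t \<Longrightarrow> alpha t = (if lam t \<ge> lmax then 0 else astar t)"
    and err_def: "\<And>t. 1 \<le> t \<Longrightarrow> err t = (if Y t \<notin> C t (1 - alpha t) then 1 else 0)"
    and err_one: "\<And>t. 1 \<le> t \<Longrightarrow> alpha t = 1 \<Longrightarrow> Y t \<notin> C t (1 - alpha t)"
    and update: "\<And>t. 1 \<le> t \<Longrightarrow> lam (Suc t) = lam t - (c * lmax) * (abar - err t)"
  shows "(\<forall>m K::nat. 1 \<le> K \<longrightarrow>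
            \<bar>(1 / real K) * (\<Sum>t = m + 1..m + K. err t) - abar\<bar> \<le> (c + 1) / (c * real K))
         \<and> ((\<lambda>K. (1 / real K) * (\<Sum>t = 1..K. err t)) \<longlonglongrightarrow> abar)"
proof -
  define g where "g = c * lmax"
  have g0: "0 < g" using c lmax by (simp add: g_def)
  have g1: "g < lmax" using mult_strict_right_mono[OF c(2) lmax] by (simp add: g_def)
  note g = g0 g1
  have ga: "0 \<le> g * abar" "g * abar \<le> g" using g0 abar mult_strict_left_mono[OF abar(2) g0] by simp_all
  have bnd: "- g * abar \<le> lam t \<and> lam t \<le> lmax + (g - g * abar)" if "1 \<le> t" for t
    using that
  proof (induction t rule: dec_induct)
    case base then show ?case using init by (simp add: g_def algebra_simps)
  next
    case (step t)
    have t1: "1 \<le> t" using step by simp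
    have upd: "lam (Suc t) = lam t - g * (abar - err t)" using update[OF t1] by (simp add: g_def)
    have e01: "err t = 0 \<or> err t = 1" using err_def[OF t1] by simp
    show ?case
    proof (cases "lmax \<le> lam t")
      case True
      then have "alpha t = 0" using alpha_def[OF t1] by simp
      then have "err t = 0" using err_def[OF t1] full[OF t1] by simp
      then have "lam (Suc t) = lam t - g * abar" using upd by simp
      then show ?thesis using step.IH True g ga by linarith
    next
      case F: False
      show ?thesis
      proof (cases "lam t \<le> 0")
        case True
        then have "alpha t = 1" using alpha_def[OF t1] astar_nonpos[OF t1] F by simp
        then have "err t = 1" using err_def[OF t1] err_one[OF t1] by simp
        then have "lam (Suc t) = lam t + (g - g * abar)" using upd by (simp add: algebra_simps)
        then show ?thesis using step.IH True g ga by linarith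
      next
        case False
        have "lam (Suc t) = lam t - g * abar \<or> lam (Suc t) = lam t + (g - g * abar)"
          using upd e01 by (auto simp: algebra_simps)
        then show ?thesis using F False g ga by linarith
      qed
    qed
  qed
  have tele: "lam (m + 1 + K) - lam (m + 1) = g * (\<Sum>t = m + 1..m + K. err t - abar)" for m K
  proof (induction K)
    case 0 then show ?case by simp
  next
    case (Suc K)
    have "lam (Suc (m + 1 + K)) = lam (m + 1 + K) - g * (abar - err (m + 1 + K))"
      using update[of "m+1+K"] by (simp add: g_def)
    then show ?case using Suc by (simp add: sum.cl_ivl_Suc algebra_simps)
  qed
  have main: "\<bar>(1 / real K) * (\<Sum>t = m + 1..m + K. err t) - abar\<bar> \<le> (c + 1) / (c * real K)"
    if K: "1 \<le> K" for m K :: nat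
  proof -
    have b1: "\<bar>lam (m + 1 + K) - lam (m + 1)\<bar> \<le> lmax + g"
      using bnd[of "m+1+K"] bnd[of "m+1"] ga unfolding abs_le_iff by linarith
    have "(\<Sum>t = m + 1..m + K. err t - abar) = (\<Sum>t = m + 1..m + K. err t) - real K * abar"
      by (simp add: sum_subtractf)
    then have eq: "(1 / real K) * (\<Sum>t = m + 1..m + K. err t) - abar
        = (lam (m + 1 + K) - lam (m + 1)) / (g * real K)"
      using tele[of m K] g K by (simp add: field_simps)
    have "\<bar>(lam (m + 1 + K) - lam (m + 1)) / (g * real K)\<bar> \<le> (lmax + g) / (g * real K)"
      using b1 g K by (simp add: abs_divide divide_right_mono)
    also have "(lmax + g) / (g * real K) = (c + 1) / (c * real K)"
      using c lmax K by (simp add: g_def field_simps)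
    finally show ?thesis using eq by simp
  qed
  have lim: "(\<lambda>K. (1 / real K) * (\<Sum>t = 1..K. err t)) \<longlonglongrightarrow> abar"
  proof -
    have "(\<lambda>K. (1 / real K) * (\<Sum>t = 1..K. err t) - abar) \<longlonglongrightarrow> 0"
    proof (rule Lim_null_comparison)
      show "\<forall>\<^sub>F K in sequentially. norm ((1 / real K) * (\<Sum>t = 1..K. err t) - abar) \<le> (c + 1) / c * (1 / real K)"
        using eventually_ge_at_top[of "1::nat"]
      proof eventually_elim
        case (elim K) then show ?case using main[of K 0] by simp
      qed
      show "(\<lambda>K. (c + 1) / c * (1 / real K)) \<longlonglongrightarrow> 0"
        by (intro tendsto_mult_right_zero lim_const_over_n)
    qed
    then show ?thesis by (simp add: LIM_zero_iff)
  qed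
  show ?thesis using main lim by blast
qed

end
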